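(* Let $T$ be a finite tree and let $M$ be a minimal dominating set of $T$ with $|M|=\Gamma(T)$. Then (i) $|a_1(M)|=|N_1(M)|$; (ii) for every $X\subseteq N_2(M)$, $|X|\le |N(X)\cap a_2(M)|$.
   Context: A dominating set of a graph $G=(V,E)$ is a set $S\subseteq V$ such that every vertex is in $S$ or adjacent to a vertex of $S$; it is minimal if no proper subset is dominating. $\Gamma(T)$ is the maximum size of a minimal dominating set of $T$. $N[u]=N(u)\cup\{u\}$; $N(X)=\bigcup_{x\in X}N(x)$. For a dominating set $S$: $a(S)=\{u\in S: S\setminus\{u\}\text{ is not dominating}\}$; $N_1(S)=\{u\in V\setminus S: |N[u]\cap S|=1\}$; $N_2(S)=\{u\in V\setminus S: |N[u]\cap S|\ge 2\}$; $a_1(S)=\{u\in a(S): N[u]\cap N_1(S)\ne\emptyset\}$; $a_2(S)=\{u\in a(S): N[u]\cap N_1(S)=\emptyset\}$. *)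

theory Defs
  imports Main
begin

definition simple_graph :: "'a set \<Rightarrow> ('a \<Rightarrow> 'a \<Rightarrow> bool) \<Rightarrow> bool" where
  "simple_graph V E \<longleftrightarrow> finite V \<and> (\<forall>u v. E u v \<longrightarrow> u \<in> V \<and> v \<in> V)
     \<and> (\<forall>u v. E u v \<longrightarrow> E v u) \<and> (\<forall>u. \<not> E u u)"

definition walk_list :: "'a set \<Rightarrow> ('a \<Rightarrow> 'a \<Rightarrow> bool) \<Rightarrow> 'a list \<Rightarrow> bool" where
  "walk_list V E xs \<longleftrightarrow> xs \<noteq> [] \<and> set xs \<subseteq> V
     \<and> (\<forall>i. Suc i < length xs \<longrightarrow> E (xs ! i) (xs ! Suc i))"

definition connected_graph :: "'a set \<Rightarrow> ('a \<Rightarrow> 'a \<Rightarrow> bool) \<Rightarrow> bool" where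
  "connected_graph V E \<longleftrightarrow>
     (\<forall>u\<in>V. \<forall>v\<in>V. \<exists>xs. walk_list V E xs \<and> hd xs = u \<and> last xs = v)"

definition is_cycle :: "'a set \<Rightarrow> ('a \<Rightarrow> 'a \<Rightarrow> bool) \<Rightarrow> 'a list \<Rightarrow> bool" where
  "is_cycle V E xs \<longleftrightarrow> length xs \<ge> 3 \<and> distinct xs \<and> walk_list V E xs \<and> E (last xs) (hd xs)"

definition is_tree :: "'a set \<Rightarrow> ('a \<Rightarrow> 'a \<Rightarrow> bool) \<Rightarrow> bool" where
  "is_tree V E \<longleftrightarrow> simple_graph V E \<and> V \<noteq> {} \<and> connected_graph V E
     \<and> \<not> (\<exists>xs. is_cycle V E xs)"

definition nbhd :: "'a set \<Rightarrow> ('a \<Rightarrow> 'a \<Rightarrow> bool) \<Rightarrow> 'a \<Rightarrow> 'a set" where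
  "nbhd V E u = {v \<in> V. E u v}"

definition cnbhd :: "'a set \<Rightarrow> ('a \<Rightarrow> 'a \<Rightarrow> bool) \<Rightarrow> 'a \<Rightarrow> 'a set" where
  "cnbhd V E u = insert u (nbhd V E u)"

definition nbhd_set :: "'a set \<Rightarrow> ('a \<Rightarrow> 'a \<Rightarrow> bool) \<Rightarrow> 'a set \<Rightarrow> 'a set" where
  "nbhd_set V E X = (\<Union>x\<in>X. nbhd V E x)"

definition dominating :: "'a set \<Rightarrow> ('a \<Rightarrow> 'a \<Rightarrow> bool) \<Rightarrow> 'a set \<Rightarrow> bool" where
  "dominating V E S \<longleftrightarrow> S \<subseteq> V \<and> (\<forall>v\<in>V. v \<in> S \<or> (\<exists>u\<in>S. E v u))"

definition minimal_dominating :: "'a set \<Rightarrow> ('a \<Rightarrow> 'a \<Rightarrow> bool) \<Rightarrow> 'a set \<Rightarrow> bool" where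
  "minimal_dominating V E S \<longleftrightarrow> dominating V E S \<and> (\<forall>S'. S' \<subset> S \<longrightarrow> \<not> dominating V E S')"

definition Gamma :: "'a set \<Rightarrow> ('a \<Rightarrow> 'a \<Rightarrow> bool) \<Rightarrow> nat" where
  "Gamma V E = Max {card S | S. minimal_dominating V E S}"

definition a_set :: "'a set \<Rightarrow> ('a \<Rightarrow> 'a \<Rightarrow> bool) \<Rightarrow> 'a set \<Rightarrow> 'a set" where
  "a_set V E S = {u \<in> S. \<not> dominating V E (S - {u})}"

definition N1 :: "'a set \<Rightarrow> ('a \<Rightarrow> 'a \<Rightarrow> bool) \<Rightarrow> 'a set \<Rightarrow> 'a set" where
  "N1 V E S = {u \<in> V - S. card (cnbhd V E u \<inter> S) = 1}"

definition N2 :: "'a set \<Rightarrow> ('a \<Rightarrow> 'a \<Rightarrow> bool) \<Rightarrow> 'a set \<Rightarrow> 'a set" where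
  "N2 V E S = {u \<in> V - S. card (cnbhd V E u \<inter> S) \<ge> 2}"

definition a1 :: "'a set \<Rightarrow> ('a \<Rightarrow> 'a \<Rightarrow> bool) \<Rightarrow> 'a set \<Rightarrow> 'a set" where
  "a1 V E S = {u \<in> a_set V E S. cnbhd V E u \<inter> N1 V E S \<noteq> {}}"

definition a2 :: "'a set \<Rightarrow> ('a \<Rightarrow> 'a \<Rightarrow> bool) \<Rightarrow> 'a set \<Rightarrow> 'a set" where
  "a2 V E S = {u \<in> a_set V E S. cnbhd V E u \<inter> N1 V E S = {}}"

end

theory Submission
  imports Defs
begin

lemma leaf_exists:
  assumes sg: "simple_graph V E" and nc: "\<not> (\<exists>xs. is_cycle V E xs)"
    and WV: "W \<subseteq> V" and Wne: "W \<noteq> {}"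
  shows "\<exists>v\<in>W. \<forall>a\<in>W. \<forall>b\<in>W. E v a \<longrightarrow> E v b \<longrightarrow> a = b"
proof (rule ccontr)
  assume "\<not> ?thesis"
  then have H: "\<forall>v\<in>W. \<exists>a\<in>W. \<exists>b\<in>W. E v a \<and> E v b \<and> a \<noteq> b" by blast
  have finW: "finite W" using WV sg finite_subset unfolding simple_graph_def by blast
  have irr: "\<And>u. \<not> E u u" using sg unfolding simple_graph_def by blast
  have step: "\<And>x y. y \<in> W \<Longrightarrow> \<exists>z. z\<in>W \<and> E y z \<and> z \<noteq> x"
  proof -
    fix x y assume "y \<in> W"
    then obtain a b where "a\<in>W" "b\<in>W" "E y a" "E y b" "a \<noteq> b" using H by blast
    then show "\<exists>z. z\<in>W \<and> E y z \<and> z \<noteq> x" by metis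
  qed
  obtain w0 where w0: "w0 \<in> W" using Wne by blast
  then obtain w1 where w1: "w1 \<in> W" "E w0 w1" using H by blast
  define nxt where "nxt = (\<lambda>(x,y). (y, SOME z. z\<in>W \<and> E y z \<and> z \<noteq> x))"
  define g where "g n = (nxt ^^ n) (w0,w1)" for n
  have gS: "g (Suc n) = nxt (g n)" for n by (simp add: g_def)
  have inv: "fst (g n) \<in> W \<and> snd (g n) \<in> W \<and> E (fst (g n)) (snd (g n))" for n
  proof (induction n)
    case 0 then show ?case using w0 w1 by (simp add: g_def)
  next
    case (Suc n)
    obtain x y where xy: "g n = (x,y)" by fastforce
    have "(SOME z. z\<in>W \<and> E y z \<and> z \<noteq> x) \<in> W \<and> E y (SOME z. z\<in>W \<and> E y z \<and> z \<noteq> x)"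
      using someI_ex[OF step[of y x]] Suc xy by auto
    then show ?case using Suc xy by (simp add: gS nxt_def)
  qed
  define w where "w n = fst (g n)" for n
  have wW: "w n \<in> W" for n using inv by (simp add: w_def)
  have wS: "w (Suc n) = snd (g n)" for n
    by (cases "g n") (simp add: w_def gS nxt_def)
  have wE: "E (w n) (w (Suc n))" for n using inv wS w_def by simp
  have nb: "w (Suc (Suc n)) \<noteq> w n" for n
  proof -
    obtain x y where xy: "g n = (x,y)" by fastforce
    have "y \<in> W" using inv[of n] xy by simp
    then have "(SOME z. z\<in>W \<and> E y z \<and> z \<noteq> x) \<noteq> x"
      using someI_ex[OF step[of y x]] by auto
    moreover have "w (Suc (Suc n)) = (SOME z. z\<in>W \<and> E y z \<and> z \<noteq> x)"
      using wS[of "Suc n"] xy by (simp add: gS nxt_def)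
    moreover have "w n = x" using xy by (simp add: w_def)
    ultimately show ?thesis by simp
  qed
  have "\<not> inj_on w {..card W}"
  proof
    assume "inj_on w {..card W}"
    then have "card (w ` {..card W}) = card W + 1" by (simp add: card_image)
    moreover have "w ` {..card W} \<subseteq> W" using wW by auto
    ultimately show False using card_mono[OF finW, of "w ` {..card W}"] by simp
  qed
  then obtain i j where "w i = w j" "i \<noteq> j" unfolding inj_on_def by blast
  then have "\<exists>j. \<exists>i<j. w i = w j" by (metis linorder_neqE_nat)
  then have "\<exists>j. (\<exists>i<j. w i = w j) \<and> (\<forall>m<j. \<not> (\<exists>i<m. w i = w m))"
    by (rule exists_least_iff[THEN iffD1])
  then obtain j where j: "\<exists>i<j. w i = w j" and jmin: "\<And>m. m < j \<Longrightarrow> \<not> (\<exists>i<m. w i = w m)"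
    by blast
  then obtain i where ij: "i < j" "w i = w j" by blast
  have j1: "j \<noteq> Suc i" using wE[of i] ij irr by metis
  have j2: "j \<noteq> Suc (Suc i)" using nb[of i] ij by metis
  define xs where "xs = map w [i..<j]"
  have len: "length xs = j - i" by (simp add: xs_def)
  have "distinct xs"
    unfolding xs_def distinct_map
  proof
    show "inj_on w (set [i..<j])"
    proof (rule inj_onI)
      fix a b assume ab: "a \<in> set [i..<j]" "b \<in> set [i..<j]" "w a = w b"
      show "a = b"
      proof (rule ccontr)
        assume "a \<noteq> b"
        then consider "a < b" | "b < a" by linarith
        then show False
        proof cases
          case 1 then show False using jmin[of b] ab by auto
        next
          case 2 then show False using jmin[of a] ab by auto
        qed
      qed
    qed
  qed simp
  moreover have "walk_list V E xs"
    unfolding walk_list_def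
  proof (intro conjI allI impI)
    show "xs \<noteq> []" using ij by (simp add: xs_def)
    show "set xs \<subseteq> V" using wW WV by (auto simp: xs_def)
    fix k assume "Suc k < length xs"
    then show "E (xs ! k) (xs ! Suc k)" using wE[of "i+k"] by (simp add: xs_def)
  qed
  moreover have "E (last xs) (hd xs)"
  proof -
    have "last xs = w (j - 1)" using ij by (simp add: xs_def last_map)
    moreover have "hd xs = w j" using ij by (simp add: xs_def hd_map)
    moreover have "Suc (j - 1) = j" using ij by simp
    ultimately show ?thesis using wE[of "j - 1"] by simp
  qed
  moreover have "length xs \<ge> 3" using len j1 j2 ij by linarith
  ultimately have "is_cycle V E xs" unfolding is_cycle_def by blast
  then show False using nc by blast
qed

lemma forest_indep:
  assumes sg: "simple_graph V E" and nc: "\<not> (\<exists>xs. is_cycle V E xs)"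
  shows "W \<subseteq> V \<Longrightarrow> \<exists>S\<subseteq>W. (\<forall>a\<in>S. \<forall>b\<in>S. \<not> E a b) \<and> card W \<le> 2 * card S"
proof (induction "card W" arbitrary: W rule: less_induct)
  case less
  have fin: "finite W" using less.prems sg finite_subset unfolding simple_graph_def by blast
  have irr: "\<And>u. \<not> E u u" and sym: "\<And>u v. E u v \<Longrightarrow> E v u"
    using sg unfolding simple_graph_def by blast+
  show ?case
  proof (cases "W = {}")
    case True then show ?thesis by auto
  next
    case False
    then obtain v where v: "v\<in>W" "\<forall>a\<in>W. \<forall>b\<in>W. E v a \<longrightarrow> E v b \<longrightarrow> a = b"
      using leaf_exists[OF sg nc less.prems] by blast
    show ?thesis
    proof (cases "\<exists>a\<in>W. E v a")
      case True
      then obtain a where a: "a\<in>W" "E v a" by blast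
      have va: "v \<noteq> a" using a irr by auto
      have c: "card (W - {v,a}) = card W - 2"
        using fin v a va by (simp add: card_Diff_subset)
      have "card W \<ge> 2" using fin v a va
        by (metis card_2_iff card_mono empty_subsetI insert_subset)
      then have "card (W - {v,a}) < card W" using c by linarith
      then obtain S where S: "S \<subseteq> W - {v,a}" "\<forall>x\<in>S. \<forall>y\<in>S. \<not> E x y" "card (W - {v,a}) \<le> 2 * card S"
        using less.hyps[of "W - {v,a}"] less.prems by blast
      have finS: "finite S" using S(1) fin finite_subset by blast
      have vS: "v \<notin> S" using S(1) by blast
      have nv: "\<forall>s\<in>S. \<not> E v s" using S(1) v a by blast
      show ?thesis
      proof (intro exI[of _ "insert v S"] conjI)
        show "insert v S \<subseteq> W" using S(1) v by blast
        show "\<forall>x\<in>insert v S. \<forall>y\<in>insert v S. \<not> E x y" using S(2) nv irr sym by blast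
        show "card W \<le> 2 * card (insert v S)" using finS vS S(3) c by simp
      qed
    next
      case False
      have c: "card (W - {v}) = card W - 1" using fin v by simp
      have "card (W - {v}) < card W" using fin v(1) by (rule card_Diff1_less)
      then obtain S where S: "S \<subseteq> W - {v}" "\<forall>x\<in>S. \<forall>y\<in>S. \<not> E x y" "card (W - {v}) \<le> 2 * card S"
        using less.hyps[of "W - {v}"] less.prems by blast
      have finS: "finite S" using S(1) fin finite_subset by blast
      have vS: "v \<notin> S" using S(1) by blast
      have nv: "\<forall>s\<in>S. \<not> E v s" using S(1) False by blast
      show ?thesis
      proof (intro exI[of _ "insert v S"] conjI)
        show "insert v S \<subseteq> W" using S(1) v by blast
        show "\<forall>x\<in>insert v S. \<forall>y\<in>insert v S. \<not> E x y" using S(2) nv irr sym by blast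
        show "card W \<le> 2 * card (insert v S)" using finS vS S(3) c by simp
      qed
    qed
  qed
qed

lemma gamma_ge:
  assumes sg: "simple_graph V E" and md: "minimal_dominating V E S"
  shows "card S \<le> Gamma V E"
proof -
  have "{card S | S. minimal_dominating V E S} \<subseteq> card ` Pow V"
    unfolding minimal_dominating_def dominating_def by auto
  then have "finite {card S | S. minimal_dominating V E S}"
    using sg unfolding simple_graph_def by (meson finite_Pow_iff finite_imageI finite_subset)
  then show ?thesis unfolding Gamma_def using md by (auto intro: Max_ge)
qed

lemma indep_ext:
  assumes sg: "simple_graph V E" and JV: "J \<subseteq> V" and ind: "\<forall>a\<in>J. \<forall>b\<in>J. \<not> E a b"
  shows "\<exists>T. minimal_dominating V E T \<and> card J \<le> card T"
proof -
  have finV: "finite V" and sym: "\<And>u v. E u v \<Longrightarrow> E v u" and irr: "\<And>u. \<not> E u u"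
    using sg unfolding simple_graph_def by blast+
  define C where "C = {T. J \<subseteq> T \<and> T \<subseteq> V \<and> (\<forall>a\<in>T. \<forall>b\<in>T. \<not> E a b)}"
  have "finite C" unfolding C_def using finV by (auto intro: finite_subset[of _ "Pow V"])
  moreover have "C \<noteq> {}" using JV ind unfolding C_def by blast
  ultimately obtain T where T: "T \<in> C" "\<forall>B\<in>C. T \<le> B \<longrightarrow> T = B"
    using finite_has_maximal by blast
  have TV: "T \<subseteq> V" and JT: "J \<subseteq> T" and indT: "\<forall>a\<in>T. \<forall>b\<in>T. \<not> E a b"
    using T(1) unfolding C_def by auto
  have dom: "dominating V E T"
    unfolding dominating_def
  proof (intro conjI ballI TV)
    fix v assume vV: "v \<in> V"
    show "v \<in> T \<or> (\<exists>u\<in>T. E v u)"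
    proof (rule ccontr)
      assume nd: "\<not> (v \<in> T \<or> (\<exists>u\<in>T. E v u))"
      then have "insert v T \<in> C" using vV TV JT indT sym irr unfolding C_def by blast
      then show False using T(2) nd by blast
    qed
  qed
  have "minimal_dominating V E T"
    unfolding minimal_dominating_def
  proof (intro conjI allI impI dom)
    fix S' assume "S' \<subset> T"
    then obtain t where t: "t \<in> T" "t \<notin> S'" by blast
    show "\<not> dominating V E S'"
      unfolding dominating_def using t indT TV \<open>S' \<subset> T\<close> by blast
  qed
  moreover have "card J \<le> card T" using JT TV finV by (meson card_mono finite_subset)
  ultimately show ?thesis by blast
qed

theorem theorem4p7:
  fixes V :: "'a set" and E :: "'a \<Rightarrow> 'a \<Rightarrow> bool" and M :: "'a set"
  assumes "is_tree V E"
    and "minimal_dominating V E M"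
    and "card M = Gamma V E"
  shows "card (a1 V E M) = card (N1 V E M)
         \<and> (\<forall>X. X \<subseteq> N2 V E M \<longrightarrow> card X \<le> card (nbhd_set V E X \<inter> a2 V E M))"
proof -
  have sg: "simple_graph V E" and nc: "\<not> (\<exists>xs. is_cycle V E xs)"
    using assms(1) unfolding is_tree_def by blast+
  have finV: "finite V" and sym: "\<And>u v. E u v \<Longrightarrow> E v u" and irr: "\<And>u. \<not> E u u"
    and EV: "\<And>u v. E u v \<Longrightarrow> u \<in> V \<and> v \<in> V"
    using sg unfolding simple_graph_def by blast+
  have dom: "dominating V E M" and mmin: "\<And>S'. S' \<subset> M \<Longrightarrow> \<not> dominating V E S'"
    using assms(2) unfolding minimal_dominating_def by blast+
  have MV: "M \<subseteq> V" and domv: "\<And>v. v \<in> V \<Longrightarrow> v \<in> M \<or> (\<exists>u\<in>M. E v u)"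
    using dom unfolding dominating_def by blast+
  have finM: "finite M" using MV finV finite_subset by blast
  define nM where "nM u = {m\<in>M. E u m}" for u
  have cn: "cnbhd V E u \<inter> M = nM u" if "u \<notin> M" for u
    using that MV unfolding cnbhd_def nbhd_def nM_def by blast
  have N1e: "N1 V E M = {u\<in>V - M. card (nM u) = 1}"
    unfolding N1_def using cn by auto
  have N2e: "N2 V E M = {u\<in>V - M. card (nM u) \<ge> 2}"
    unfolding N2_def using cn by auto
  have aM: "a_set V E M = M"
  proof -
    have "u \<in> M \<Longrightarrow> \<not> dominating V E (M - {u})" for u using mmin by blast
    then show ?thesis unfolding a_set_def by blast
  qed
  have a1e: "a1 V E M = {u\<in>M. \<exists>p\<in>N1 V E M. E u p}"
  proof -
    have "cnbhd V E u \<inter> N1 V E M \<noteq> {} \<longleftrightarrow> (\<exists>p\<in>N1 V E M. E u p)" if "u \<in> M" for u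
      using that unfolding N1e cnbhd_def nbhd_def by auto
    then show ?thesis unfolding a1_def aM by blast
  qed
  have a2e: "a2 V E M = M - a1 V E M"
    unfolding a1_def a2_def aM by blast
  have iso: "\<not> E u w" if u: "u \<in> a2 V E M" and w: "w \<in> M" for u w
  proof
    assume Euw: "E u w"
    have uM: "u \<in> M" and ua1: "u \<notin> a1 V E M" using u a2e by auto
    have "M - {u} \<subset> M" using uM by blast
    then have "\<not> dominating V E (M - {u})" by (rule mmin)
    then obtain v where v: "v \<in> V" "v \<notin> M - {u}" "\<not> (\<exists>x\<in>M - {u}. E v x)"
      unfolding dominating_def using MV by blast
    show False
    proof (cases "v = u")
      case True
      then show False using v Euw w irr by blast
    next
      case False
      then have vM: "v \<notin> M" using v by blast
      then obtain x where "x \<in> M" "E v x" using domv v(1) by blast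
      then have "x = u" using v False by blast
      then have "nM v = {u}" using v \<open>E v x\<close> uM unfolding nM_def by blast
      then have "v \<in> N1 V E M" unfolding N1e using v vM by simp
      moreover have "E u v" using \<open>E v x\<close> \<open>x = u\<close> sym by blast
      ultimately have "u \<in> a1 V E M" unfolding a1e using uM by blast
      then show False using ua1 by blast
    qed
  qed
  have c1: "card (a1 V E M) \<le> card (N1 V E M)"
  proof -
    define g where "g p = (THE m. m \<in> nM p)" for p
    have "a1 V E M \<subseteq> g ` N1 V E M"
    proof
      fix u assume "u \<in> a1 V E M"
      then obtain p where p: "p \<in> N1 V E M" "E u p" "u \<in> M" unfolding a1e by blast
      then have "card (nM p) = 1" unfolding N1e by simp
      then obtain x where x: "nM p = {x}" by (auto simp: card_1_singleton_iff)
      have "u \<in> nM p" using p(2,3) sym unfolding nM_def by simp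
      then have "x = u" using x by simp
      then have "g p = u" unfolding g_def using x by simp
      then show "u \<in> g ` N1 V E M" using p by blast
    qed
    moreover have "finite (N1 V E M)" using finV unfolding N1e by simp
    ultimately show ?thesis by (meson card_image_le card_mono finite_imageI le_trans)
  qed
  have key: "card (N1 V E M) + card X \<le> card (a1 V E M) + card (nbhd_set V E X \<inter> a2 V E M)"
    if X: "X \<subseteq> N2 V E M" for X
  proof -
    define A where "A = a1 V E M"
    define P where "P = N1 V E M"
    define I where "I = a2 V E M"
    define Y where "Y = nbhd_set V E X \<inter> I"
    define U where "U = A \<union> P \<union> X \<union> Y"
    have AM: "A \<subseteq> M" unfolding A_def a1e by blast
    have IM: "I \<subseteq> M" unfolding I_def a2e by blast
    have AI: "A \<inter> I = {}" unfolding A_def I_def a2e by blast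
    have MAI: "M = A \<union> I" unfolding A_def I_def a2e using AM A_def by blast
    have PV: "P \<subseteq> V - M" unfolding P_def N1e by blast
    have XV: "X \<subseteq> V - M" using X unfolding N2e by blast
    have PX: "P \<inter> X = {}" using X unfolding P_def N1e N2e by auto
    have YI: "Y \<subseteq> I" unfolding Y_def by blast
    have UV: "U \<subseteq> V" unfolding U_def using AM IM YI PV XV MV by blast
    have finA: "finite A" using finite_subset[OF AM finM] .
    have finI: "finite I" using finite_subset[OF IM finM] .
    have finP: "finite P" using PV finV by (meson Diff_subset finite_subset)
    have finX: "finite X" using XV finV by (meson Diff_subset finite_subset)
    have finY: "finite Y" using finite_subset[OF YI finI] .
    obtain S where S: "S \<subseteq> U" "\<forall>a\<in>S. \<forall>b\<in>S. \<not> E a b" "card U \<le> 2 * card S"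
      using forest_indep[OF sg nc UV] by blast
    have sep: "\<not> E a b" if a: "a \<in> I - Y" and b: "b \<in> U" for a b
    proof
      assume Eab: "E a b"
      have aI: "a \<in> a2 V E M" using a unfolding I_def by blast
      consider "b \<in> M" | "b \<in> P" | "b \<in> X" using b AM IM YI unfolding U_def by blast
      then show False
      proof cases
        case 1 then show False using iso[OF aI] Eab by blast
      next
        case 2
        then have "a \<in> a1 V E M" using a IM Eab unfolding P_def a1e by blast
        then show False using aI a2e by blast
      next
        case 3
        have "a \<in> nbhd V E b" unfolding nbhd_def using Eab sym EV by blast
        then have "a \<in> Y" unfolding Y_def nbhd_set_def using 3 a by blast
        then show False using a by blast
      qed
    qed
    define J where "J = (I - Y) \<union> S"
    have JV: "J \<subseteq> V" unfolding J_def using IM MV S(1) UV by blast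
    have indJ: "\<forall>a\<in>J. \<forall>b\<in>J. \<not> E a b"
    proof (intro ballI)
      fix a b assume a: "a \<in> J" and b: "b \<in> J"
      have IU: "I - Y \<subseteq> U \<union> (I - Y)" by blast
      show "\<not> E a b"
      proof (cases "a \<in> S")
        case True
        show ?thesis
        proof (cases "b \<in> S")
          case True then show ?thesis using \<open>a \<in> S\<close> S(2) by blast
        next
          case False
          then have "b \<in> I - Y" using b unfolding J_def by blast
          then show ?thesis using sep[of b a] \<open>a \<in> S\<close> S(1) sym by blast
        qed
      next
        case False
        then have aa: "a \<in> I - Y" using a unfolding J_def by blast
        show ?thesis
        proof (cases "b \<in> S")
          case True then show ?thesis using sep[OF aa] S(1) by blast
        next
          case False
          then have "b \<in> I - Y" using b unfolding J_def by blast
          then show ?thesis using iso aa IM unfolding I_def by blast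
        qed
      qed
    qed
    obtain T where T: "minimal_dominating V E T" "card J \<le> card T"
      using indep_ext[OF sg JV indJ] by blast
    have "card T \<le> card M" using gamma_ge[OF sg T(1)] assms(3) by simp
    have disjJ: "(I - Y) \<inter> S = {}" using S(1) AI PV XV IM unfolding U_def by blast
    have finS: "finite S" using finite_subset[OF S(1) finite_subset[OF UV finV]] .
    have cJ: "card J = card (I - Y) + card S"
      unfolding J_def using disjJ finI finS by (simp add: card_Un_disjoint)
    have cIY: "card (I - Y) = card I - card Y" using YI finY by (simp add: card_Diff_subset)
    have cYI: "card Y \<le> card I" using YI finI by (simp add: card_mono)
    have cM: "card M = card A + card I" using MAI AI finA finI by (simp add: card_Un_disjoint)
    have cU: "card U = card A + card P + card X + card Y"
    proof -
      have d1: "A \<inter> P = {}" using AM PV by blast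
      have d2: "(A \<union> P) \<inter> X = {}" using AM XV PX by blast
      have d3: "(A \<union> P \<union> X) \<inter> Y = {}" using AI YI PV XV IM by blast
      show ?thesis unfolding U_def
        using d1 d2 d3 finA finP finX finY by (simp add: card_Un_disjoint)
    qed
    have "card P + card X \<le> card A + card Y"
      using cJ cIY cYI cM cU S(3) T(2) \<open>card T \<le> card M\<close> by linarith
    then show ?thesis unfolding A_def P_def Y_def I_def by simp
  qed
  have "card (N1 V E M) \<le> card (a1 V E M)" using key[of "{}"] by (simp add: nbhd_set_def)
  then have i: "card (a1 V E M) = card (N1 V E M)" using c1 by simp
  have "\<forall>X. X \<subseteq> N2 V E M \<longrightarrow> card X \<le> card (nbhd_set V E X \<inter> a2 V E M)"
  proof (intro allI impI)
    fix X assume "X \<subseteq> N2 V E M"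
    from key[OF this] c1 show "card X \<le> card (nbhd_set V E X \<inter> a2 V E M)" by linarith
  qed
  with i show ?thesis by blast
qed

end
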